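(* For $t>0$ and $0<v<1$ let $$L_v(t):=\frac{1}{\log t}\left(\frac{1-v}{v}\left(t-t^{1-v}\right)+\frac{v}{1-v}\left(t^{1-v}-1\right)\right)\quad (t\neq 1),\qquad L_v(1):=1.$$ Then for each fixed $t$ with $0<t\le 1$ the function $v\mapsto L_v(t)$ is increasing on $(0,1)$, and for each fixed $t\ge 1$ the function $v\mapsto L_v(t)$ is decreasing on $(0,1)$.
   Context: $L_v(t)$ is the representing function of the weighted logarithmic mean; the value at $t=1$ is its limit as $t\to1$. *)

theory Defs
  imports Complex_Main
begin

definition Lv :: "real \<Rightarrow> real \<Rightarrow> real" where
  "Lv v t = (if t = 1 then 1 else
     (1 / ln t) * ((1 - v) / v * (t - t powr (1 - v)) + v / (1 - v) * (t powr (1 - v) - 1)))"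

end

theory Submission
  imports Defs
begin

definition FF :: "real \<Rightarrow> real \<Rightarrow> real" where
  "FF s v = (1 - v) / v * (exp s - exp ((1 - v) * s)) + v / (1 - v) * (exp ((1 - v) * s) - 1)"

definition gg :: "real \<Rightarrow> real \<Rightarrow> real" where
  "gg a s = - ((1-a)^2) * exp s + (a^2 + (1-a)^2) * exp ((1-a)*s) - a^2
            + a*(1-a)*((1-a)-a) * s * exp ((1-a)*s)"

lemma h_nonpos:
  fixes a s :: real
  assumes "0 < a" "a < 1" "0 \<le> s"
  shows "- ((1-a)^2) * exp (a*s) + (1-a)*(a^2+(1-a)^2) + a*(1-a)*((1-a)-a)*(1+(1-a)*s) \<le> 0"
proof -
  have e: "exp (a*s) \<ge> 1 + a*s" by (rule exp_ge_add_one_self)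
  have "- ((1-a)^2) * exp (a*s) \<le> - ((1-a)^2) * (1 + a*s)"
    using e by (simp add: mult_left_mono)
  moreover have "- ((1-a)^2) * (1 + a*s) + (1-a)*(a^2+(1-a)^2) + a*(1-a)*((1-a)-a)*(1+(1-a)*s)
      = -2*a^2*(1-a)^2*s" by (simp add: algebra_simps power2_eq_square)
  moreover have "-2*a^2*(1-a)^2*s \<le> 0" using assms by simp
  ultimately show ?thesis by linarith
qed

lemma gg_nonpos:
  fixes a s :: real
  assumes "0 < a" "a < 1" "0 \<le> s"
  shows "gg a s \<le> 0"
proof -
  let ?g' = "\<lambda>x. exp ((1-a)*x) * (- ((1-a)^2) * exp (a*x) + (1-a)*(a^2+(1-a)^2) + a*(1-a)*((1-a)-a)*(1+(1-a)*x))"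
  have "gg a s \<le> gg a 0"
  proof (rule deriv_nonpos_imp_antimono[where g = "gg a" and g' = ?g'])
    fix x assume "x \<in> {0..s}"
    have d: "(gg a has_real_derivative
       (- ((1-a)^2) * exp x + (a^2 + (1-a)^2) * (exp ((1-a)*x) * (1-a))
            + a*(1-a)*((1-a)-a) * (exp ((1-a)*x) + x * (exp ((1-a)*x) * (1-a))))) (at x)"
      unfolding gg_def
      by (auto intro!: derivative_eq_intros simp: algebra_simps)
    have "exp x = exp ((1-a)*x) * exp (a*x)" by (simp add: mult_exp_exp algebra_simps)
    then have "(- ((1-a)^2) * exp x + (a^2 + (1-a)^2) * (exp ((1-a)*x) * (1-a))
            + a*(1-a)*((1-a)-a) * (exp ((1-a)*x) + x * (exp ((1-a)*x) * (1-a)))) = ?g' x"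
      by (simp add: algebra_simps)
    with d show "(gg a has_real_derivative ?g' x) (at x)" by simp
  next
    fix x assume "x \<in> {0..s}"
    then have "- ((1-a)^2) * exp (a*x) + (1-a)*(a^2+(1-a)^2) + a*(1-a)*((1-a)-a)*(1+(1-a)*x) \<le> 0"
      using h_nonpos assms by auto
    then show "?g' x \<le> 0" by (simp add: mult_nonneg_nonpos)
  qed (use assms in auto)
  also have "gg a 0 = 0" unfolding gg_def by (simp add: algebra_simps power2_eq_square)
  finally show ?thesis .
qed

lemma alg_aux:
  fixes a b E X s :: real
  assumes "a \<noteq> 0" "b \<noteq> 0" "a + b = 1"
  shows "- (1/a^2) * (X - E) + b/a * (s * E) + 1/b^2 * (E - 1) - a/b * (s * E)
     = (-(b^2)*X + (a^2+b^2)*E - a^2 + a*b*(b-a)*s*E)/(a^2*b^2)"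
proof -
  have q: "a^2 * b^2 \<noteq> 0" using assms by simp
  have 1: "- (1/a^2) * (X - E) = (-(b^2)*(X - E)) / (a^2*b^2)" using assms by (simp add: field_simps)
  have 2: "b/a * (s * E) = (a*b^3*s*E) / (a^2*b^2)" using assms by (simp add: field_simps power2_eq_square power3_eq_cube)
  have 3: "1/b^2 * (E - 1) = (a^2*(E - 1)) / (a^2*b^2)" using assms by (simp add: field_simps)
  have 4: "a/b * (s * E) = (a^3*b*s*E) / (a^2*b^2)" using assms by (simp add: field_simps power2_eq_square power3_eq_cube)
  have 5: "a*b^3*s*E - a^3*b*s*E = a*b*(b-a)*s*E"
  proof -
    have "a*b^3*s*E - a^3*b*s*E = a*b*((b-a)*(a+b))*s*E" by (simp add: algebra_simps power2_eq_square power3_eq_cube)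
    then show ?thesis using assms(3) by simp
  qed
  have "- (1/a^2) * (X - E) + b/a * (s * E) + 1/b^2 * (E - 1) - a/b * (s * E)
     = ((-(b^2)*(X - E)) + a*b^3*s*E + a^2*(E - 1) - a^3*b*s*E) / (a^2*b^2)"
    unfolding 1 2 3 4 by (simp add: add_divide_distrib diff_divide_distrib)
  also have "((-(b^2)*(X - E)) + a*b^3*s*E + a^2*(E - 1) - a^3*b*s*E) = (-(b^2)*X + (a^2+b^2)*E - a^2 + a*b*(b-a)*s*E)"
    using 5 by (simp add: algebra_simps)
  finally show ?thesis .
qed

lemma deriv_aux:
  fixes a b E X s :: real
  assumes "a \<noteq> 0" "b \<noteq> 0" "a + b = 1"
  shows "((E - X + E * s * b) * a - b * (X - E)) / (a * a) +
         ((E - 1 - E * s * a) * b + a * (E - 1)) / (b * b) =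
         b * (s * E) / a - (X - E) / a^2 + (E - 1) / b^2 - a * (s * E) / b"
proof -
  have 1: "(E - X + E * s * b) * a - b * (X - E) = (E - X) * (a + b) + E*s*b*a" by (simp add: algebra_simps)
  have 2: "(E - 1 - E * s * a) * b + a * (E - 1) = (E - 1) * (a + b) - E*s*a*b" by (simp add: algebra_simps)
  show ?thesis unfolding 1 2 assms(3) using assms(1,2) by (simp add: field_simps power2_eq_square)
qed

lemma FF_anti_pos:
  fixes s v1 v2 :: real
  assumes "0 \<le> s" "0 < v1" "v1 \<le> v2" "v2 < 1"
  shows "FF s v2 \<le> FF s v1"
proof (rule deriv_nonpos_imp_antimono[where g = "FF s" and a = v1 and b = v2 and g' = "\<lambda>v. gg v s / (v^2 * (1-v)^2)"])
  fix v assume v: "v \<in> {v1..v2}"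
  then have v0: "0 < v" "v < 1" using assms by auto
  have d: "((\<lambda>v. FF s v) has_real_derivative
      (- (1/v^2) * (exp s - exp ((1-v)*s)) + (1-v)/v * (s * exp ((1-v)*s))
       + 1/(1-v)^2 * (exp ((1-v)*s) - 1) - v/(1-v) * (s * exp ((1-v)*s)))) (at v)"
  proof -
    show ?thesis unfolding FF_def using v0
      apply (auto intro!: derivative_eq_intros)
      by (rule deriv_aux) auto
  qed
  have "(- (1/v^2) * (exp s - exp ((1-v)*s)) + (1-v)/v * (s * exp ((1-v)*s))
       + 1/(1-v)^2 * (exp ((1-v)*s) - 1) - v/(1-v) * (s * exp ((1-v)*s))) = gg v s / (v^2 * (1-v)^2)"
    unfolding gg_def by (rule alg_aux) (use v0 in auto)
  with d show "(FF s has_real_derivative gg v s / (v^2 * (1-v)^2)) (at v)" by simp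
next
  fix v assume v: "v \<in> {v1..v2}"
  then have v0: "0 < v" "v < 1" using assms by auto
  have "gg v s \<le> 0" using gg_nonpos v0 assms by auto
  then show "gg v s / (v^2 * (1-v)^2) \<le> 0" by (simp add: divide_nonpos_nonneg)
qed (use assms in auto)

lemma FF_sym:
  fixes s v :: real
  assumes "0 < v" "v < 1"
  shows "FF s v = - exp s * FF (-s) (1 - v)"
proof -
  have a: "exp ((1-v)*s) = exp s * exp (- (v * s))" by (simp add: mult_exp_exp algebra_simps)
  have b: "exp (- s) = 1 / exp s" by (simp add: exp_minus field_simps)
  have c: "exp (- ((1 - v) * s)) = exp (- s) * exp (v * s)" by (simp add: mult_exp_exp algebra_simps)
  have d: "exp (v * s) = 1 / exp (- (v * s))" by (simp add: exp_minus field_simps)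
  have "FF (-s) (1 - v) = v / (1 - v) * (exp (-s) - exp (- (v * s))) + (1 - v) / v * (exp (- (v * s)) - 1)"
    unfolding FF_def by (simp add: algebra_simps)
  moreover have "FF s v = (1 - v) / v * (exp s - exp s * exp (- (v * s))) + v / (1 - v) * (exp s * exp (- (v * s)) - 1)"
    unfolding FF_def a by simp
  moreover have "(1 - v) / v * (exp s - exp s * exp (- (v * s))) + v / (1 - v) * (exp s * exp (- (v * s)) - 1)
     = - exp s * (v / (1 - v) * (1 / exp s - exp (- (v * s))) + (1 - v) / v * (exp (- (v * s)) - 1))"
    using assms by (simp add: field_simps)
  ultimately show ?thesis unfolding b by simp
qed

lemma FF_anti:
  fixes s v1 v2 :: real
  assumes "0 < v1" "v1 \<le> v2" "v2 < 1"
  shows "FF s v2 \<le> FF s v1"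
proof (cases "0 \<le> s")
  case True then show ?thesis using FF_anti_pos assms by blast
next
  case False
  have "FF (-s) (1-v1) \<le> FF (-s) (1-v2)"
    using FF_anti_pos[of "-s" "1-v2" "1-v1"] False assms by auto
  then have "exp s * FF (-s) (1-v1) \<le> exp s * FF (-s) (1-v2)"
    by (rule mult_left_mono) simp
  moreover have "FF s v1 = - exp s * FF (-s) (1-v1)" by (rule FF_sym) (use assms in auto)
  moreover have "FF s v2 = - exp s * FF (-s) (1-v2)" by (rule FF_sym) (use assms in auto)
  ultimately show ?thesis by linarith
qed

lemma Lv_FF: "0 < t \<Longrightarrow> t \<noteq> 1 \<Longrightarrow> 0 < v \<Longrightarrow> v < 1 \<Longrightarrow> Lv v t = FF (ln t) v / ln t"
proof -
  assume t: "0 < t" "t \<noteq> 1"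
  have p: "t powr (1 - v) = exp ((1 - v) * ln t)" using t by (simp add: powr_def)
  have e: "exp (ln t) = t" using t by simp
  show ?thesis unfolding Lv_def FF_def p e using t by simp
qed

theorem proposition2p7:
  shows "(\<forall>t::real. 0 < t \<and> t \<le> 1 \<longrightarrow> mono_on {0<..<1} (\<lambda>v. Lv v t)) \<and>
         (\<forall>t::real. 1 \<le> t \<longrightarrow> antimono_on {0<..<1} (\<lambda>v. Lv v t))"
proof (intro conjI allI impI)
  fix t :: real assume t: "0 < t \<and> t \<le> 1"
  show "mono_on {0<..<1} (\<lambda>v. Lv v t)"
  proof (cases "t = 1")
    case True
    have "\<And>v. Lv v t = 1" unfolding Lv_def using True by simp
    then show ?thesis unfolding monotone_on_def by (metis order_refl)
  next
    case False
    then have l: "ln t < 0" using t by simp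
    show ?thesis unfolding mono_on_def
    proof (intro allI impI)
      fix r s :: real assume rs: "r \<in> {0<..<1} \<and> s \<in> {0<..<1} \<and> r \<le> s"
      have FFm: "FF (ln t) s \<le> FF (ln t) r" using FF_anti[of r s "ln t"] rs by auto
      have Lr: "Lv r t = FF (ln t) r / ln t" using Lv_FF[of t r] t False rs by auto
      have Ls: "Lv s t = FF (ln t) s / ln t" using Lv_FF[of t s] t False rs by auto
      from FFm have "FF (ln t) r / ln t \<le> FF (ln t) s / ln t" using l by (simp add: divide_right_mono_neg)
      then show "Lv r t \<le> Lv s t" unfolding Lr Ls .
    qed
  qed
next
  fix t :: real assume t: "1 \<le> t"
  show "antimono_on {0<..<1} (\<lambda>v. Lv v t)"
  proof (cases "t = 1")
    case True
    have "\<And>v. Lv v t = 1" unfolding Lv_def using True by simp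
    then show ?thesis unfolding monotone_on_def by (metis order_refl)
  next
    case False
    then have l: "ln t > 0" using t by simp
    show ?thesis unfolding monotone_on_def
    proof (intro ballI impI)
      fix r s :: real assume rs0: "r \<in> {0<..<1}" "s \<in> {0<..<1}" "r \<le> s"
      then have rs: "r \<in> {0<..<1} \<and> s \<in> {0<..<1} \<and> r \<le> s" by blast
      have FFm: "FF (ln t) s \<le> FF (ln t) r" using FF_anti[of r s "ln t"] rs by auto
      have Lr: "Lv r t = FF (ln t) r / ln t" using Lv_FF[of t r] t False rs by auto
      have Ls: "Lv s t = FF (ln t) s / ln t" using Lv_FF[of t s] t False rs by auto
      from FFm have "FF (ln t) s / ln t \<le> FF (ln t) r / ln t" using l by (simp add: divide_right_mono)
      then show "Lv s t \<le> Lv r t" unfolding Lr Ls .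
    qed
  qed
qed

end
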